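(* Let $G$ be a cyclic group of order $3$ and $p \neq 2$ a prime, and let $\mathbb{Z}_{(p)} = \{ m/n : m,n \in \mathbb{Z},\ \gcd(p,n)=1\}$. Then the group ring $\mathbb{Z}_{(p)}G$ is $\Sigma$-strongly clean.
   Context: All rings are associative with identity. For a positive integer $n$, an element $x \in R$ is $n$-strongly clean if $x = e + u_1 + \cdots + u_n$ where $e^2=e$, $u_1,\dots,u_n$ are units of $R$, and $eu_i = u_i e$ for all $i$. An element of $R$ is $\Sigma$-strongly clean if it is $n$-strongly clean for some positive integer $n$; $R$ is $\Sigma$-strongly clean if every element of $R$ is $\Sigma$-strongly clean. *)

theory Defs
  imports "HOL-Computational_Algebra.Primes" "HOL-Algebra.Algebra"
begin

definition Zloc :: "nat \<Rightarrow> rat set" where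
  "Zloc p = {of_int m / of_int n | m n :: int. gcd (int p) n = 1}"

text \<open>The group ring Z_(p)G for G = <g> cyclic of order 3.  An element
  a0 + a1 g + a2 g^2 is represented by the triple (a0, a1, a2); multiplication
  is the convolution induced by g^3 = 1.\<close>
fun C3_mult :: "rat \<times> rat \<times> rat \<Rightarrow> rat \<times> rat \<times> rat \<Rightarrow> rat \<times> rat \<times> rat" where
  "C3_mult (a0, a1, a2) (b0, b1, b2) =
     (a0 * b0 + a1 * b2 + a2 * b1,
      a0 * b1 + a1 * b0 + a2 * b2,
      a0 * b2 + a1 * b1 + a2 * b0)"

fun C3_add :: "rat \<times> rat \<times> rat \<Rightarrow> rat \<times> rat \<times> rat \<Rightarrow> rat \<times> rat \<times> rat" where
  "C3_add (a0, a1, a2) (b0, b1, b2) = (a0 + b0, a1 + b1, a2 + b2)"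

definition C3_group_ring :: "nat \<Rightarrow> (rat \<times> rat \<times> rat) ring" where
  "C3_group_ring p =
    \<lparr> carrier = Zloc p \<times> Zloc p \<times> Zloc p,
      monoid.mult = C3_mult,
      one = (1, 0, 0),
      ring.zero = (0, 0, 0),
      ring.add = C3_add \<rparr>"

definition n_strongly_clean :: "('a, 'b) ring_scheme \<Rightarrow> nat \<Rightarrow> 'a \<Rightarrow> bool" where
  "n_strongly_clean R n x \<longleftrightarrow>
     (\<exists>e u. e \<in> carrier R \<and> e \<otimes>\<^bsub>R\<^esub> e = e \<and>
        (\<forall>i\<in>{1..n}. u i \<in> Units R \<and> e \<otimes>\<^bsub>R\<^esub> u i = u i \<otimes>\<^bsub>R\<^esub> e) \<and>
        x = e \<oplus>\<^bsub>R\<^esub> (finsum R u {1..n}))"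

definition Sigma_strongly_clean_elem :: "('a, 'b) ring_scheme \<Rightarrow> 'a \<Rightarrow> bool" where
  "Sigma_strongly_clean_elem R x \<longleftrightarrow> (\<exists>n. n \<ge> 1 \<and> n_strongly_clean R n x)"

definition Sigma_strongly_clean :: "('a, 'b) ring_scheme \<Rightarrow> bool" where
  "Sigma_strongly_clean R \<longleftrightarrow> (\<forall>x \<in> carrier R. Sigma_strongly_clean_elem R x)"

end

theory Submission
  imports Defs
begin

lemma den_nz: "Factorial_Ring.prime (p::nat) \<Longrightarrow> gcd (int p) n = 1 \<Longrightarrow> n \<noteq> 0"
  by (metis gcd_0_int nat_int not_prime_1 of_nat_1 prime_gt_0_nat abs_of_nat nat_one_as_int)

lemma zloc_iff: "q \<in> Zloc p \<longleftrightarrow> (\<exists>m n. q = of_int m / of_int n \<and> coprime (int p) n)"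
  unfolding Zloc_def by (auto simp: coprime_iff_gcd_eq_1)

lemma zloc_add:
  assumes pr: "Factorial_Ring.prime p" and a: "a \<in> Zloc p" and b: "b \<in> Zloc p"
  shows "a + b \<in> Zloc p"
proof -
  obtain m n where 1: "a = of_int m / of_int n" "coprime (int p) n" using a zloc_iff by blast
  obtain m' n' where 2: "b = of_int m' / of_int n'" "coprime (int p) n'" using b zloc_iff by blast
  have "n \<noteq> 0" "n' \<noteq> 0" using den_nz[OF pr] 1 2 by (auto simp: coprime_iff_gcd_eq_1)
  hence "a + b = of_int (m*n' + m'*n) / of_int (n*n')" using 1 2 by (simp add: field_simps)
  moreover have "coprime (int p) (n*n')" using 1 2 by simp
  ultimately show ?thesis using zloc_iff by blast
qed

lemma zloc_of_int: "Factorial_Ring.prime p \<Longrightarrow> of_int k \<in> Zloc p"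
  unfolding zloc_iff by (rule exI[of _ k], rule exI[of _ 1], simp)

definition unitZ :: "nat \<Rightarrow> rat \<Rightarrow> bool" where
  "unitZ p c \<longleftrightarrow> (\<exists>m n. c = of_int m / of_int n \<and> coprime (int p) m \<and> coprime (int p) n)"

lemma unitZ_props:
  assumes pr: "Factorial_Ring.prime p" and u: "unitZ p c"
  shows "c \<in> Zloc p" "1 / c \<in> Zloc p" "c * (1 / c) = 1"
proof -
  obtain m n where 1: "c = of_int m / of_int n" "coprime (int p) m" "coprime (int p) n"
    using u unitZ_def by blast
  have "n \<noteq> 0" "m \<noteq> 0" using den_nz[OF pr] 1 by (auto simp: coprime_iff_gcd_eq_1)
  show "c \<in> Zloc p" using 1 zloc_iff by blast
  have "1 / c = of_int n / of_int m" using 1 by simp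
  thus "1 / c \<in> Zloc p" using 1 zloc_iff by blast
  show "c * (1 / c) = 1" using 1 \<open>n \<noteq> 0\<close> \<open>m \<noteq> 0\<close> by simp
qed

lemma two_units:
  assumes pr: "Factorial_Ring.prime p" and p2: "p \<noteq> 2" and a: "a \<in> Zloc p"
  shows "\<exists>u v. unitZ p u \<and> unitZ p v \<and> a = u + v"
proof -
  obtain m n where 1: "a = of_int m / of_int n" "coprime (int p) n" using a zloc_iff by blast
  have nz: "n \<noteq> 0" using den_nz[OF pr] 1 by (auto simp: coprime_iff_gcd_eq_1)
  have pi: "Factorial_Ring.prime (int p)" using pr by simp
  show ?thesis
  proof (cases "coprime (int p) (m - n)")
    case True
    have "unitZ p 1" unfolding unitZ_def by (rule exI[of _ 1], rule exI[of _ 1], simp)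
    moreover have "unitZ p (of_int (m - n) / of_int n)" unfolding unitZ_def using True 1 by blast
    moreover have "a = 1 + of_int (m - n) / of_int n" using 1 nz by (simp add: field_simps)
    ultimately show ?thesis by blast
  next
    case False
    hence d: "int p dvd (m - n)" using pi prime_imp_coprime by blast
    have c2: "coprime (int p) (m - 2*n)"
    proof (rule ccontr)
      assume "\<not> coprime (int p) (m - 2*n)"
      hence "int p dvd (m - 2*n)" using pi prime_imp_coprime by blast
      with d have "int p dvd ((m - n) - (m - 2*n))" by (rule dvd_diff)
      hence "int p dvd n" by simp
      thus False using 1(2) pi by (metis coprime_absorb_left not_prime_unit)
    qed
    have c22: "coprime (int p) 2"
    proof (rule ccontr)
      assume "\<not> coprime (int p) 2"
      hence "int p dvd 2" using pi prime_imp_coprime by blast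
      hence "p dvd 2" by presburger
      hence "p \<le> 2" by (simp add: dvd_imp_le)
      thus False using p2 pr prime_ge_2_nat[of p] by simp
    qed
    have "unitZ p 2" unfolding unitZ_def using c22 by (intro exI[of _ 2] exI[of _ 1]) simp
    moreover have "unitZ p (of_int (m - 2*n) / of_int n)" unfolding unitZ_def using c2 1 by blast
    moreover have "a = 2 + of_int (m - 2*n) / of_int n" using 1 nz by (simp add: field_simps)
    ultimately show ?thesis by blast
  qed
qed

lemma am: assumes pr: "Factorial_Ring.prime p" shows "abelian_monoid (C3_group_ring p)"
proof (rule abelian_monoidI)
  show "\<zero>\<^bsub>C3_group_ring p\<^esub> \<in> carrier (C3_group_ring p)"
    using zloc_of_int[OF pr, of 0] by (simp add: C3_group_ring_def)
qed (auto simp: C3_group_ring_def zloc_add[OF pr] add.assoc add.commute)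


lemma unit1: assumes pr: "Factorial_Ring.prime p" and u: "unitZ p c"
  shows "(c,0,0) \<in> Units (C3_group_ring p)" "(0,c,0) \<in> Units (C3_group_ring p)"
        "(0,0,c) \<in> Units (C3_group_ring p)"
proof -
  note up = unitZ_props[OF pr u]
  have z: "0 \<in> Zloc p" using zloc_of_int[OF pr, of 0] by simp
  have cm: "1/c * c = 1" using up(3) by (simp add: mult.commute)
  have cc: "(c,0,0) \<in> carrier (C3_group_ring p)" "(0,c,0) \<in> carrier (C3_group_ring p)"
     "(0,0,c) \<in> carrier (C3_group_ring p)" "(1/c,0,0) \<in> carrier (C3_group_ring p)"
     "(0,1/c,0) \<in> carrier (C3_group_ring p)" "(0,0,1/c) \<in> carrier (C3_group_ring p)"
    using up z by (auto simp: C3_group_ring_def)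
  have m: "(1/c,0,0) \<otimes>\<^bsub>C3_group_ring p\<^esub> (c,0,0) = \<one>\<^bsub>C3_group_ring p\<^esub>"
    "(c,0,0) \<otimes>\<^bsub>C3_group_ring p\<^esub> (1/c,0,0) = \<one>\<^bsub>C3_group_ring p\<^esub>"
    "(0,0,1/c) \<otimes>\<^bsub>C3_group_ring p\<^esub> (0,c,0) = \<one>\<^bsub>C3_group_ring p\<^esub>"
    "(0,c,0) \<otimes>\<^bsub>C3_group_ring p\<^esub> (0,0,1/c) = \<one>\<^bsub>C3_group_ring p\<^esub>"
    "(0,1/c,0) \<otimes>\<^bsub>C3_group_ring p\<^esub> (0,0,c) = \<one>\<^bsub>C3_group_ring p\<^esub>"
    "(0,0,c) \<otimes>\<^bsub>C3_group_ring p\<^esub> (0,1/c,0) = \<one>\<^bsub>C3_group_ring p\<^esub>"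
    using up(3) cm by (simp_all add: C3_group_ring_def)
  show "(c,0,0) \<in> Units (C3_group_ring p)" unfolding Units_def using cc m by blast
  show "(0,c,0) \<in> Units (C3_group_ring p)" unfolding Units_def using cc m by blast
  show "(0,0,c) \<in> Units (C3_group_ring p)" unfolding Units_def using cc m by blast
qed

theorem corollary1p15:
  fixes p :: nat
  assumes "Factorial_Ring.prime p" and "p \<noteq> 2"
  shows "Sigma_strongly_clean (C3_group_ring p)"
  unfolding Sigma_strongly_clean_def
proof
  fix x assume x: "x \<in> carrier (C3_group_ring p)"
  then obtain a0 a1 a2 where xa: "x = (a0,a1,a2)" "a0 \<in> Zloc p" "a1 \<in> Zloc p" "a2 \<in> Zloc p"
    by (auto simp: C3_group_ring_def)
  obtain b0 c0 where 0: "unitZ p b0" "unitZ p c0" "a0 = b0 + c0" using two_units[OF assms xa(2)] by blast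
  obtain b1 c1 where 1: "unitZ p b1" "unitZ p c1" "a1 = b1 + c1" using two_units[OF assms xa(3)] by blast
  obtain b2 c2 where 2: "unitZ p b2" "unitZ p c2" "a2 = b2 + c2" using two_units[OF assms xa(4)] by blast
  define u :: "nat \<Rightarrow> rat \<times> rat \<times> rat" where "u = (\<lambda>i. if i = 1 then (b0,0,0) else if i = 2 then (c0,0,0)
     else if i = 3 then (0,b1,0) else if i = 4 then (0,c1,0) else if i = 5 then (0,0,b2) else (0,0,c2))"
  let ?R = "C3_group_ring p"
  have AM: "abelian_monoid ?R" by (rule am[OF assms(1)])
  have U: "\<forall>i\<in>{1..6::nat}. u i \<in> Units ?R"
    using unit1[OF assms(1) 0(1)] unit1[OF assms(1) 0(2)] unit1[OF assms(1) 1(1)]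
      unit1[OF assms(1) 1(2)] unit1[OF assms(1) 2(1)] unit1[OF assms(1) 2(2)]
    by (auto simp: u_def)
  have UC: "\<And>i. i \<in> {1..6::nat} \<Longrightarrow> u i \<in> carrier ?R" using U by (auto simp: Units_def)
  have S: "{1..6::nat} = insert 1 (insert 2 (insert 3 (insert 4 (insert 5 {6}))))" by auto
  have "finsum ?R u {1..6} = u 1 \<oplus>\<^bsub>?R\<^esub> (u 2 \<oplus>\<^bsub>?R\<^esub> (u 3 \<oplus>\<^bsub>?R\<^esub> (u 4 \<oplus>\<^bsub>?R\<^esub> (u 5 \<oplus>\<^bsub>?R\<^esub> u 6))))"
    unfolding S using UC
    by (simp add: abelian_monoid.finsum_insert[OF AM] abelian_monoid.finsum_empty[OF AM] abelian_monoid.r_zero[OF AM] Pi_def)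
  also have "\<dots> = x" using xa 0 1 2 by (simp add: u_def C3_group_ring_def)
  finally have FS: "finsum ?R u {1..6} = x" .
  have "n_strongly_clean ?R 6 x"
    unfolding n_strongly_clean_def
  proof (intro exI[of _ "(0,0,0)"] exI[of _ u] conjI)
    show "(0,0,0) \<in> carrier ?R" using zloc_of_int[OF assms(1), of 0] by (simp add: C3_group_ring_def)
    show "(0,0,0) \<otimes>\<^bsub>?R\<^esub> (0,0,0) = (0::rat,0::rat,0::rat)" by (simp add: C3_group_ring_def)
    show "\<forall>i\<in>{1..6}. u i \<in> Units ?R \<and> (0,0,0) \<otimes>\<^bsub>?R\<^esub> u i = u i \<otimes>\<^bsub>?R\<^esub> (0,0,0)"
      using U by (auto simp: C3_group_ring_def u_def)
    show "x = (0,0,0) \<oplus>\<^bsub>?R\<^esub> finsum ?R u {1..6}" using FS xa by (simp add: C3_group_ring_def)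
  qed
  thus "Sigma_strongly_clean_elem ?R x" unfolding Sigma_strongly_clean_elem_def
    by (intro exI[of _ 6]) simp
qed

end
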